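(* Let $\mathcal{T}=[0,T_{max}]$, let $\mathcal{T}_d\subseteq\mathcal{T}$ be compact, let $\mathcal{X}=[X_{min},X_{max}]$ with $0\le X_{min}<X_{max}$, let $m$ be a probability measure on $\mathcal{X}\times\mathcal{T}_a$ (with $\mathcal{T}_a\subseteq\mathcal{T}$ compact), and let $G>0$. Let $V:\mathbb{R}^+\to\mathbb{R}^+$ be a strictly decreasing, Lipschitz continuous speed function. Then for every $F\in\mathcal{P}_{m,G}$ there exists a unique $z_F\in\mathcal{C}(\mathcal{T})$ such that $$z_F(t)=\int_0^t V\big(F(S_s(z_F))\big)\,ds\qquad\text{for all } t\in\mathcal{T}.$$
   Context: $\mathcal{C}(\mathcal{T})$ denotes the space of real-valued continuous functions on $\mathcal{T}$ with the uniform norm. $\lambda_2$ denotes Lebesgue measure on $\mathbb{R}^2$. $\mathcal{P}_{m,G}$ is the set of all Borel probability measures $F$ on $\mathcal{T}_d\times\mathcal{X}$ such that (i) $F(B)\le G\,\lambda_2(B)$ for every Borel set $B\subseteq\mathcal{T}_d\times\mathcal{X}$, and (ii) $F(\mathcal{T}_d\times B)=m(B\times\mathcal{T}_a)$ for every Borel set $B\subseteq\mathcal{X}$. For $z\in\mathcal{C}(\mathcal{T})$ and $t\in\mathcal{T}$, $S_t(z):=\{(\tau,\xi)\,:\,\tau\in[0,t]\cap\mathcal{T}_d,\ \xi\in(z(t)-z(\tau),\infty)\cap\mathcal{X}\}$ (the set of (departure time, trip length) pairs of trips still travelling at time $t$). *)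

theory Defs
  imports "HOL-Probability.Probability"
begin

text \<open>S_t(z): (departure time, trip length) pairs of trips still travelling at time t.\<close>
definition still_travelling ::
  "real set \<Rightarrow> real set \<Rightarrow> (real \<Rightarrow> real) \<Rightarrow> real \<Rightarrow> (real \<times> real) set" where
  "still_travelling Td X z t =
     {(\<tau>, \<xi>). \<tau> \<in> {0..t} \<inter> Td \<and> \<xi> \<in> {z t - z \<tau> <..} \<inter> X}"

text \<open>P_{m,G}: Borel probability measures F on Td x X (as measures on the Borel sets of
  R^2 concentrated on Td x X), with density bounded by G w.r.t. Lebesgue measure
  and with X-marginal equal to the X-marginal of m.\<close>
definition P_mG ::
  "real set \<Rightarrow> real set \<Rightarrow> real set \<Rightarrow> (real \<times> real) measure \<Rightarrow> real \<Rightarrow> (real \<times> real) measure set" where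
  "P_mG Td Ta X m G =
     {F. sets F = sets borel \<and> prob_space F \<and> emeasure F (Td \<times> X) = 1 \<and>
         (\<forall>B \<in> sets borel. B \<subseteq> Td \<times> X \<longrightarrow> emeasure F B \<le> ennreal G * emeasure lborel B) \<and>
         (\<forall>B \<in> sets borel. B \<subseteq> X \<longrightarrow> emeasure F (Td \<times> B) = emeasure m (B \<times> Ta))}"

end

theory Submission
  imports Defs
begin

definition Pset :: "real set \<Rightarrow> real set \<Rightarrow> real \<Rightarrow> (real \<Rightarrow> real) \<Rightarrow> (real \<times> real) set" where
  "Pset Td X s f = {(\<tau>, \<xi>). \<tau> \<in> {0..s} \<inter> Td \<and> \<xi> \<in> {f \<tau><..} \<inter> X}"

lemma st_eq: "still_travelling Td X z s = Pset Td X s (\<lambda>\<tau>. z s - z \<tau>)"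
  by (simp add: still_travelling_def Pset_def)

lemma clamp_cont:
  fixes s :: real and f :: "real \<Rightarrow> 'b::topological_space"
  assumes "0 \<le> s" "continuous_on {0..s} f"
  shows "continuous_on UNIV (\<lambda>x. f (max 0 (min s x)))"
proof (rule continuous_on_compose2[OF assms(2)])
  show "continuous_on UNIV (\<lambda>x::real. max 0 (min s x))"
    by (intro continuous_on_max continuous_on_min continuous_on_const continuous_on_id)
qed (use assms(1) in auto)

lemma Pset_borel:
  assumes "closed Td" "0 \<le> s" "continuous_on {0..s} f"
  shows "Pset Td {a..b} s f \<in> sets borel"
proof -
  have eq: "Pset Td {a..b} s f = (({0..s} \<inter> Td) \<times> {a..b}) \<inter> {p. f (max 0 (min s (fst p))) < snd p}"
    by (auto simp: Pset_def)
  have c: "continuous_on UNIV (\<lambda>p::real\<times>real. f (max 0 (min s (fst p))))"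
    by (rule continuous_on_compose2[OF clamp_cont[OF assms(2,3)]]) (auto intro!: continuous_intros)
  have "open {p::real\<times>real. f (max 0 (min s (fst p))) < snd p}"
    by (rule open_Collect_less[OF c]) (auto intro!: continuous_intros)
  moreover have "closed (({0..s} \<inter> Td) \<times> {a..b})"
    using assms(1) by (intro closed_Times closed_Int) auto
  ultimately show ?thesis unfolding eq by (intro sets.Int borel_open borel_closed)
qed

lemma strip_borel:
  fixes g :: "real \<Rightarrow> real"
  assumes g: "continuous_on UNIV g"
  shows "{p::real\<times>real. fst p \<in> {0..s} \<and> g (fst p) - \<delta> < snd p \<and> snd p \<le> g (fst p)} \<in> sets borel"
proof -
  let ?R = "{p::real\<times>real. fst p \<in> {0..s} \<and> g (fst p) - \<delta> < snd p \<and> snd p \<le> g (fst p)}"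
  have eq: "?R = ({0..s} \<times> UNIV) \<inter> {p. g (fst p) - \<delta> < snd p} \<inter> {p. snd p \<le> g (fst p)}"
    by auto
  have c: "continuous_on UNIV (\<lambda>p::real\<times>real. g (fst p))"
    by (rule continuous_on_compose2[OF g]) (auto intro!: continuous_intros)
  have "open {p::real\<times>real. g (fst p) - \<delta> < snd p}"
    by (rule open_Collect_less) (auto intro!: continuous_intros c)
  moreover have "closed {p::real\<times>real. snd p \<le> g (fst p)}"
    by (rule closed_Collect_le) (auto intro!: continuous_intros c)
  moreover have "closed ({0..s} \<times> (UNIV::real set))" by (intro closed_Times) auto
  ultimately show ?thesis unfolding eq by (intro sets.Int borel_open borel_closed)
qed

lemma strip_measure:
  assumes s: "0 \<le> s" and d: "0 \<le> \<delta>" and g: "continuous_on UNIV g"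
  shows "emeasure lborel {p::real\<times>real. fst p \<in> {0..s} \<and> g (fst p) - \<delta> < snd p \<and> snd p \<le> g (fst p)} = ennreal (s*\<delta>)"
proof -
  let ?R = "{p::real\<times>real. fst p \<in> {0..s} \<and> g (fst p) - \<delta> < snd p \<and> snd p \<le> g (fst p)}"
  have eq: "?R = ({0..s} \<times> UNIV) \<inter> {p. g (fst p) - \<delta> < snd p} \<inter> {p. snd p \<le> g (fst p)}"
    by auto
  have c: "continuous_on UNIV (\<lambda>p::real\<times>real. g (fst p))"
    by (rule continuous_on_compose2[OF g]) (auto intro!: continuous_intros)
  have "open {p::real\<times>real. g (fst p) - \<delta> < snd p}"
    by (rule open_Collect_less) (auto intro!: continuous_intros c)
  moreover have "closed {p::real\<times>real. snd p \<le> g (fst p)}"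
    by (rule closed_Collect_le) (auto intro!: continuous_intros c)
  moreover have "closed ({0..s} \<times> (UNIV::real set))" by (intro closed_Times) auto
  ultimately have Rb: "?R \<in> sets borel" unfolding eq by (intro sets.Int borel_open borel_closed)
  have "emeasure lborel ?R = emeasure (lborel \<Otimes>\<^sub>M lborel) ?R" by (simp add: lborel_prod)
  also have "\<dots> = (\<integral>\<^sup>+x. emeasure lborel (Pair x -` ?R) \<partial>lborel)"
  proof (rule lborel.emeasure_pair_measure_alt)
    have "sets (lborel \<Otimes>\<^sub>M lborel) = sets (borel::(real\<times>real) measure)"
      by (simp only: lborel_prod sets_lborel)
    then show "?R \<in> sets (lborel \<Otimes>\<^sub>M lborel)" using Rb by simp
  qed
  also have "\<dots> = (\<integral>\<^sup>+x. ennreal \<delta> * indicator {0..s} x \<partial>lborel)"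
  proof (rule nn_integral_cong)
    fix x :: real
    have "Pair x -` ?R = (if x \<in> {0..s} then {g x - \<delta> <.. g x} else {})" by auto
    then show "emeasure lborel (Pair x -` ?R) = ennreal \<delta> * indicator {0..s} x"
      using d by (auto simp: indicator_def)
  qed
  also have "\<dots> = ennreal (s*\<delta>)"
    using s d by (simp add: nn_integral_cmult_indicator ennreal_mult mult.commute)
  finally show ?thesis .
qed

lemma lemA:
  fixes F :: "(real \<times> real) measure" and f g :: "real \<Rightarrow> real"
  assumes sF: "sets F = sets borel" and fin: "finite_measure F" and Td: "closed Td"
    and dens: "\<forall>B\<in>sets borel. B \<subseteq> Td \<times> {a..b} \<longrightarrow> emeasure F B \<le> ennreal G * emeasure lborel B"
    and G: "G > 0" and s: "0 \<le> s" and f: "continuous_on {0..s} f" and g: "continuous_on {0..s} g"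
    and fg: "\<forall>\<tau>\<in>{0..s}. \<bar>f \<tau> - g \<tau>\<bar> \<le> \<delta>" and d: "0 \<le> \<delta>"
  shows "measure F (Pset Td {a..b} s f) - measure F (Pset Td {a..b} s g) \<le> G * s * \<delta>"
proof -
  interpret finite_measure F by (rule fin)
  let ?A = "Pset Td {a..b} s f" and ?B = "Pset Td {a..b} s g"
  have A: "?A \<in> sets borel" and B: "?B \<in> sets borel" using Pset_borel[OF Td s] f g by auto
  define g' where "g' = (\<lambda>x. g (max 0 (min s x)))"
  have g': "continuous_on UNIV g'" unfolding g'_def by (rule clamp_cont[OF s g])
  let ?R = "{p::real\<times>real. fst p \<in> {0..s} \<and> g' (fst p) - \<delta> < snd p \<and> snd p \<le> g' (fst p)}"
  have sub: "?A - ?B \<subseteq> ?R"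
  proof
    fix p assume p: "p \<in> ?A - ?B"
    obtain t x where [simp]: "p = (t, x)" by (cases p)
    have t: "t \<in> {0..s}" and "f t < x" "\<not> g t < x" using p by (auto simp: Pset_def)
    moreover have "g' t = g t" using t by (simp add: g'_def)
    moreover have "\<bar>f t - g t\<bar> \<le> \<delta>" using fg t by auto
    ultimately show "p \<in> ?R" by auto
  qed
  have AB: "?A - ?B \<in> sets borel" using A B by auto
  have "?A - ?B \<subseteq> Td \<times> {a..b}" by (auto simp: Pset_def)
  then have "emeasure F (?A - ?B) \<le> ennreal G * emeasure lborel (?A - ?B)" using dens AB by auto
  also have "\<dots> \<le> ennreal G * emeasure lborel ?R"
    by (intro mult_left_mono emeasure_mono sub) (use strip_borel[OF g', of s \<delta>] in auto)
  also have "\<dots> = ennreal (G * s * \<delta>)"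
    using strip_measure[OF s d g'] G s d by (simp add: ennreal_mult mult.assoc)
  finally have "measure F (?A - ?B) \<le> G * s * \<delta>"
    using G s d by (simp add: emeasure_eq_measure)
  moreover have "measure F (?A - ?B) = measure F ?A - measure F (?A \<inter> ?B)"
    using A B sF by (intro finite_measure_Diff') auto
  moreover have "measure F (?A \<inter> ?B) \<le> measure F ?B"
    using B sF by (intro finite_measure_mono) auto
  ultimately show ?thesis by linarith
qed

lemma lemB:
  fixes F :: "(real \<times> real) measure" and f :: "real \<Rightarrow> real"
  assumes sF: "sets F = sets borel" and fin: "finite_measure F" and Td: "closed Td"
    and dens: "\<forall>B\<in>sets borel. B \<subseteq> Td \<times> {a..b} \<longrightarrow> emeasure F B \<le> ennreal G * emeasure lborel B"
    and G: "G > 0" and s: "0 \<le> s" "s \<le> s'" and f: "continuous_on {0..s'} f" and ab: "a \<le> b"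
  shows "0 \<le> measure F (Pset Td {a..b} s' f) - measure F (Pset Td {a..b} s f)"
    and "measure F (Pset Td {a..b} s' f) - measure F (Pset Td {a..b} s f) \<le> G * (s' - s) * (b - a)"
proof -
  interpret finite_measure F by (rule fin)
  let ?A = "Pset Td {a..b} s' f" and ?B = "Pset Td {a..b} s f"
  have f2: "continuous_on {0..s} f" using f by (rule continuous_on_subset) (use s in auto)
  have A: "?A \<in> sets borel" using Pset_borel[OF Td _ f] s by auto
  have B: "?B \<in> sets borel" using Pset_borel[OF Td s(1) f2] by auto
  have BA: "?B \<subseteq> ?A" using s by (auto simp: Pset_def)
  have dif: "measure F (?A - ?B) = measure F ?A - measure F ?B"
    using A B sF BA by (intro finite_measure_Diff) auto
  show "0 \<le> measure F ?A - measure F ?B" using finite_measure_mono[OF BA] A sF by simp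
  have sub: "?A - ?B \<subseteq> {s<..s'} \<times> {a..b}" by (auto simp: Pset_def)
  have AB: "?A - ?B \<in> sets borel" using A B by auto
  have "?A - ?B \<subseteq> Td \<times> {a..b}" by (auto simp: Pset_def)
  then have "emeasure F (?A - ?B) \<le> ennreal G * emeasure lborel (?A - ?B)" using dens AB by auto
  also have "\<dots> \<le> ennreal G * emeasure lborel ({s<..s'} \<times> {a..b})"
    by (intro mult_left_mono emeasure_mono sub) (auto intro!: borel_closed closed_Times simp: borel_prod[symmetric])
  also have "emeasure lborel ({s<..s'} \<times> {a..b}) = emeasure (lborel \<Otimes>\<^sub>M lborel) ({s<..s'} \<times> {a..b::real})"
    by (simp add: lborel_prod)
  also have "\<dots> = ennreal (s'-s) * ennreal (b-a)"
    using s ab by (simp add: lborel.emeasure_pair_measure_Times)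
  also have "ennreal G * (ennreal (s'-s) * ennreal (b-a)) = ennreal (G * (s' - s) * (b - a))"
    using G s ab by (simp add: ennreal_mult mult.assoc)
  finally have "measure F (?A - ?B) \<le> G * (s' - s) * (b - a)"
    using G s ab by (simp add: emeasure_eq_measure)
  then show "measure F ?A - measure F ?B \<le> G * (s' - s) * (b - a)" using dif by simp
qed

lemma st_local:
  assumes "\<forall>\<tau>\<in>{0..s}. z \<tau> = w \<tau>"
  shows "still_travelling Td X z s = still_travelling Td X w s"
proof (cases "0 \<le> s")
  case True
  then have "z s = w s" using assms by auto
  then show ?thesis using assms by (auto simp: still_travelling_def)
next
  case False
  then show ?thesis by (auto simp: still_travelling_def)
qed

theorem proposition2:
  fixes Tmax Xmin Xmax G :: real
    and Td Ta :: "real set"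
    and m :: "(real \<times> real) measure"
    and V :: "real \<Rightarrow> real"
    and F :: "(real \<times> real) measure"
  assumes Td: "compact Td" "Td \<subseteq> {0..Tmax}"
    and Ta: "compact Ta" "Ta \<subseteq> {0..Tmax}"
    and X: "0 \<le> Xmin" "Xmin < Xmax"
    and m: "sets m = sets borel" "prob_space m" "emeasure m ({Xmin..Xmax} \<times> Ta) = 1"
    and G: "G > 0"
    and V_nonneg: "\<forall>x \<ge> 0. V x \<ge> 0"
    and V_decr: "strict_antimono_on {0..} V"
    and V_lip: "\<exists>C. C-lipschitz_on {0..} V"
    and F: "F \<in> P_mG Td Ta {Xmin..Xmax} m G"
  shows "\<exists>z. continuous_on {0..Tmax} z \<and>
           (\<forall>t \<in> {0..Tmax}.
              ((\<lambda>s. V (measure F (still_travelling Td {Xmin..Xmax} z s))) has_integral z t) {0..t}) \<and>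
           (\<forall>w. continuous_on {0..Tmax} w \<and>
              (\<forall>t \<in> {0..Tmax}.
                 ((\<lambda>s. V (measure F (still_travelling Td {Xmin..Xmax} w s))) has_integral w t) {0..t})
              \<longrightarrow> (\<forall>t \<in> {0..Tmax}. w t = z t))"
proof -
  from F have sF: "sets F = sets borel" and pF: "prob_space F"
    and F1: "emeasure F (Td \<times> {Xmin..Xmax}) = 1"
    and dens: "\<forall>B\<in>sets borel. B \<subseteq> Td \<times> {Xmin..Xmax} \<longrightarrow> emeasure F B \<le> ennreal G * emeasure lborel B"
    unfolding P_mG_def by auto
  interpret prob_space F by (rule pF)
  have fin: "finite_measure F" by (rule finite_measure_axioms)
  have Tdc: "closed Td" using Td(1) by (rule compact_imp_closed)
  have "Td \<noteq> {}" using F1 by auto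
  then have T0: "0 \<le> Tmax" using Td(2) by auto
  obtain L where L: "L-lipschitz_on {0..} V" using V_lip by auto
  have L0: "0 \<le> L" using L by (simp add: lipschitz_on_def)
  have Vc: "continuous_on {0..} V" using L by (rule lipschitz_on_continuous_on)
  have VL: "\<bar>V x - V y\<bar> \<le> L * \<bar>x - y\<bar>" if "0 \<le> x" "0 \<le> y" for x y
    using L that by (auto simp: lipschitz_on_def dist_real_def)
  define ST where "ST z s = measure F (still_travelling Td {Xmin..Xmax} z s)" for z s
  have ST0: "0 \<le> ST z s" for z s by (simp add: ST_def)

  have key1: "\<bar>ST z1 s - ST z2 s\<bar> \<le> G * Tmax * (2*D)"
    if z1: "continuous_on {0..Tmax} z1" and z2: "continuous_on {0..Tmax} z2" and sT: "s \<in> {0..Tmax}"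
      and zD: "\<forall>\<tau>\<in>{0..s}. \<bar>z1 \<tau> - z2 \<tau>\<bar> \<le> D" for z1 z2 s D
  proof -
    have s: "0 \<le> s" "s \<le> Tmax" using sT by auto
    have "continuous_on {0..s} z1" using z1 by (rule continuous_on_subset) (use s in auto)
    then have c1: "continuous_on {0..s} (\<lambda>\<tau>. z1 s - z1 \<tau>)" by (intro continuous_intros)
    have "continuous_on {0..s} z2" using z2 by (rule continuous_on_subset) (use s in auto)
    then have c2: "continuous_on {0..s} (\<lambda>\<tau>. z2 s - z2 \<tau>)" by (intro continuous_intros)
    have D: "0 \<le> D" using zD s by (metis abs_ge_zero atLeastAtMost_iff order.trans order_refl)
    have fg: "\<forall>\<tau>\<in>{0..s}. \<bar>(z1 s - z1 \<tau>) - (z2 s - z2 \<tau>)\<bar> \<le> 2*D"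
    proof
      fix \<tau> assume "\<tau> \<in> {0..s}"
      moreover have "s \<in> {0..s}" using s by auto
      ultimately have "\<bar>z1 s - z2 s\<bar> \<le> D" "\<bar>z1 \<tau> - z2 \<tau>\<bar> \<le> D" using zD by auto
      then show "\<bar>(z1 s - z1 \<tau>) - (z2 s - z2 \<tau>)\<bar> \<le> 2*D" by linarith
    qed
    have fg': "\<forall>\<tau>\<in>{0..s}. \<bar>(z2 s - z2 \<tau>) - (z1 s - z1 \<tau>)\<bar> \<le> 2*D"
      using fg by (simp add: abs_minus_commute)
    have a: "ST z1 s - ST z2 s \<le> G * s * (2*D)" unfolding ST_def st_eq
      by (rule lemA[OF sF fin Tdc dens G s(1) c1 c2 fg]) (use D in simp)
    have b: "ST z2 s - ST z1 s \<le> G * s * (2*D)" unfolding ST_def st_eq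
      by (rule lemA[OF sF fin Tdc dens G s(1) c2 c1 fg']) (use D in simp)
    have "G * s * (2*D) \<le> G * Tmax * (2*D)" using G s D by (intro mult_right_mono mult_left_mono) auto
    then show ?thesis using a b by linarith
  qed

  have key2: "\<bar>ST z s' - ST z s\<bar> \<le> G * \<bar>s' - s\<bar> * (Xmax - Xmin) + G * Tmax * \<bar>z s' - z s\<bar>"
    if z: "continuous_on {0..Tmax} z" and ss: "s \<in> {0..Tmax}" "s' \<in> {0..Tmax}" for z s s'
  proof -
    have main: "\<bar>ST z b - ST z a\<bar> \<le> G * (b - a) * (Xmax - Xmin) + G * Tmax * \<bar>z b - z a\<bar>"
      if ab: "0 \<le> a" "a \<le> b" "b \<le> Tmax" for a b
    proof -
      have zb: "continuous_on {0..b} z" using z by (rule continuous_on_subset) (use ab in auto)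
      have za: "continuous_on {0..a} z" using z by (rule continuous_on_subset) (use ab in auto)
      have cb: "continuous_on {0..b} (\<lambda>\<tau>. z b - z \<tau>)" using zb by (intro continuous_intros)
      have ca: "continuous_on {0..a} (\<lambda>\<tau>. z a - z \<tau>)" using za by (intro continuous_intros)
      have cba: "continuous_on {0..a} (\<lambda>\<tau>. z b - z \<tau>)" using za by (intro continuous_intros)
      let ?P = "\<lambda>s f. measure F (Pset Td {Xmin..Xmax} s f)"
      have B1: "0 \<le> ?P b (\<lambda>\<tau>. z b - z \<tau>) - ?P a (\<lambda>\<tau>. z b - z \<tau>)"
        and B2: "?P b (\<lambda>\<tau>. z b - z \<tau>) - ?P a (\<lambda>\<tau>. z b - z \<tau>) \<le> G * (b - a) * (Xmax - Xmin)"
        using lemB[OF sF fin Tdc dens G ab(1) ab(2) cb] X(2) by auto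
      have A1: "?P a (\<lambda>\<tau>. z b - z \<tau>) - ?P a (\<lambda>\<tau>. z a - z \<tau>) \<le> G * a * \<bar>z b - z a\<bar>"
        by (rule lemA[OF sF fin Tdc dens G ab(1) cba ca]) auto
      have A2: "?P a (\<lambda>\<tau>. z a - z \<tau>) - ?P a (\<lambda>\<tau>. z b - z \<tau>) \<le> G * a * \<bar>z b - z a\<bar>"
        by (rule lemA[OF sF fin Tdc dens G ab(1) ca cba]) auto
      have "G * a * \<bar>z b - z a\<bar> \<le> G * Tmax * \<bar>z b - z a\<bar>"
        using G ab by (intro mult_right_mono mult_left_mono) auto
      moreover have "ST z b = ?P b (\<lambda>\<tau>. z b - z \<tau>)" "ST z a = ?P a (\<lambda>\<tau>. z a - z \<tau>)"
        by (simp_all add: ST_def st_eq)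
      ultimately show ?thesis using B1 B2 A1 A2 by linarith
    qed
    show ?thesis
    proof (cases "s \<le> s'")
      case True
      then show ?thesis using main[of s s'] ss by auto
    next
      case False
      then have "\<bar>ST z s - ST z s'\<bar> \<le> G * (s - s') * (Xmax - Xmin) + G * Tmax * \<bar>z s - z s'\<bar>"
        using main[of s' s] ss by auto
      then show ?thesis using False by (simp add: abs_minus_commute)
    qed
  qed

  have STc: "continuous_on {0..Tmax} (ST z)" if z: "continuous_on {0..Tmax} z" for z
    unfolding continuous_on_def
  proof
    fix s assume s: "s \<in> {0..Tmax}"
    have "((\<lambda>s'. ST z s' - ST z s) \<longlongrightarrow> 0) (at s within {0..Tmax})"
    proof (rule Lim_null_comparison)
      show "\<forall>\<^sub>F s' in at s within {0..Tmax}. norm (ST z s' - ST z s) \<le> G * \<bar>s' - s\<bar> * (Xmax - Xmin) + G * Tmax * \<bar>z s' - z s\<bar>"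
        using key2[OF z s] unfolding eventually_at_filter by (auto intro!: always_eventually)
      have "(z \<longlongrightarrow> z s) (at s within {0..Tmax})" using z s by (simp add: continuous_on_def)
      then show "((\<lambda>s'. G * \<bar>s' - s\<bar> * (Xmax - Xmin) + G * Tmax * \<bar>z s' - z s\<bar>) \<longlongrightarrow> 0) (at s within {0..Tmax})"
        by (auto intro!: tendsto_eq_intros)
    qed
    then show "(ST z \<longlongrightarrow> ST z s) (at s within {0..Tmax})" by (rule LIM_zero_cancel)
  qed
  have hc: "continuous_on {0..Tmax} (\<lambda>s. V (ST z s))" if "continuous_on {0..Tmax} z" for z
    by (rule continuous_on_compose2[OF Vc STc[OF that]]) (auto simp: ST0)
  have hint: "(\<lambda>s. V (ST z s)) integrable_on {0..t}" if "continuous_on {0..Tmax} z" "t \<le> Tmax" for z t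
  proof -
    have "continuous_on {0..t} (\<lambda>s. V (ST z s))" using hc[OF that(1)] by (rule continuous_on_subset) (use that in auto)
    then show ?thesis by (rule integrable_continuous_real)
  qed

  define C where "C = L * G * Tmax * 2"
  define k where "k = 2 * C + 1"
  have C0: "0 \<le> C" using L0 G T0 by (simp add: C_def)
  have k0: "0 < k" using C0 by (simp add: k_def)
  define cl where "cl t = max 0 (min Tmax t)" for t
  have cl: "cl t \<in> {0..Tmax}" for t using T0 by (auto simp: cl_def)
  have clid: "cl t = t" if "t \<in> {0..Tmax}" for t using that by (auto simp: cl_def)
  define Z where "Z y s = exp (k * s) * apply_bcontfun y s" for y :: "real \<Rightarrow>\<^sub>C real" and s
  define \<Phi> where "\<Phi> z t = integral {0..t} (\<lambda>s. V (ST z s))" for z t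
  have Zc: "continuous_on {0..Tmax} (Z y)" for y
    unfolding Z_def by (intro continuous_intros continuous_on_apply_bcontfun)
  have \<Phi>c: "continuous_on {0..Tmax} (\<Phi> z)" if "continuous_on {0..Tmax} z" for z
    unfolding \<Phi>_def by (rule indefinite_integral_continuous_1[OF hint[OF that order_refl]])
  have bc: "(\<lambda>t. f (cl t)) \<in> bcontfun" if "continuous_on {0..Tmax} f" for f :: "real \<Rightarrow> real"
  proof -
    have "continuous_on UNIV (\<lambda>t. f (cl t))" unfolding cl_def by (rule clamp_cont[OF T0 that])
    moreover have "bounded (range (\<lambda>t. f (cl t)))"
    proof (rule bounded_subset)
      show "bounded (f ` {0..Tmax})" by (intro compact_imp_bounded compact_continuous_image that) auto
      show "range (\<lambda>t. f (cl t)) \<subseteq> f ` {0..Tmax}" using cl by auto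
    qed
    ultimately show ?thesis by (simp add: bcontfun_def)
  qed
  define \<psi> where "\<psi> y = Bcontfun (\<lambda>t. exp (- k * cl t) * \<Phi> (Z y) (cl t))" for y
  have \<psi>app: "apply_bcontfun (\<psi> y) t = exp (- k * cl t) * \<Phi> (Z y) (cl t)" for y t
  proof -
    have "continuous_on {0..Tmax} (\<lambda>t. exp (- k * t) * \<Phi> (Z y) t)"
      by (intro continuous_intros \<Phi>c Zc)
    from bc[OF this] show ?thesis unfolding \<psi>_def by (simp add: Bcontfun_inverse)
  qed

  have contr: "dist (\<psi> y1) (\<psi> y2) \<le> 1/2 * dist y1 y2" for y1 y2
  proof (rule dist_bound)
    fix t
    define c where "c = cl t"
    define d where "d = dist y1 y2"
    have c: "0 \<le> c" "c \<le> Tmax" using cl by (auto simp: c_def)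
    have d0: "0 \<le> d" by (simp add: d_def)
    have Zd: "\<bar>Z y1 s - Z y2 s\<bar> \<le> exp (k * s) * d" for s
    proof -
      have "Z y1 s - Z y2 s = exp (k * s) * (apply_bcontfun y1 s - apply_bcontfun y2 s)"
        by (simp add: Z_def algebra_simps)
      moreover have "\<bar>apply_bcontfun y1 s - apply_bcontfun y2 s\<bar> \<le> d"
        using dist_bounded[of y1 s y2] by (simp add: d_def dist_real_def)
      ultimately show ?thesis by (simp add: abs_mult mult_left_mono)
    qed
    have hd: "\<bar>V (ST (Z y1) s) - V (ST (Z y2) s)\<bar> \<le> C * d * exp (k * s)" if s: "s \<in> {0..c}" for s
    proof -
      have sT: "s \<in> {0..Tmax}" using s c by auto
      have "\<forall>\<tau>\<in>{0..s}. \<bar>Z y1 \<tau> - Z y2 \<tau>\<bar> \<le> exp (k * s) * d"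
      proof
        fix \<tau> assume "\<tau> \<in> {0..s}"
        then have "exp (k * \<tau>) \<le> exp (k * s)" using k0 by auto
        then have "exp (k * \<tau>) * d \<le> exp (k * s) * d" using d0 by (rule mult_right_mono)
        then show "\<bar>Z y1 \<tau> - Z y2 \<tau>\<bar> \<le> exp (k * s) * d" using Zd[of \<tau>] by linarith
      qed
      from key1[OF Zc Zc sT this]
      have "\<bar>ST (Z y1) s - ST (Z y2) s\<bar> \<le> G * Tmax * (2 * (exp (k * s) * d))" .
      then have "L * \<bar>ST (Z y1) s - ST (Z y2) s\<bar> \<le> L * (G * Tmax * (2 * (exp (k * s) * d)))"
        using L0 by (rule mult_left_mono)
      moreover have "L * (G * Tmax * (2 * (exp (k * s) * d))) = C * d * exp (k * s)"
        by (simp add: C_def)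
      ultimately show ?thesis using VL[OF ST0 ST0, of "Z y1" s "Z y2" s] by linarith
    qed
    have int1: "(\<lambda>s. V (ST (Z y1) s)) integrable_on {0..c}" by (rule hint[OF Zc c(2)])
    have int2: "(\<lambda>s. V (ST (Z y2) s)) integrable_on {0..c}" by (rule hint[OF Zc c(2)])
    have intd: "(\<lambda>s. V (ST (Z y1) s) - V (ST (Z y2) s)) integrable_on {0..c}"
      using int1 int2 by (rule integrable_diff)
    have expint: "((\<lambda>s. C * d * exp (k * s)) has_integral
        (C * d * exp (k * c) / k - C * d * exp (k * 0) / k)) {0..c}"
    proof (rule fundamental_theorem_of_calculus[of 0 c "\<lambda>s. C * d * exp (k * s) / k" "\<lambda>s. C * d * exp (k * s)"])
      show "0 \<le> c" by (rule c(1))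
      fix x
      have "((\<lambda>s. C * d * exp (k * s) / k) has_real_derivative C * d * exp (k * x)) (at x within {0..c})"
        using k0 by (auto intro!: derivative_eq_intros)
      then show "((\<lambda>s. C * d * exp (k * s) / k) has_vector_derivative C * d * exp (k * x)) (at x within {0..c})"
        by (simp add: has_real_derivative_iff_has_vector_derivative)
    qed
    have expi: "(\<lambda>s. C * d * exp (k * s)) integrable_on {0..c}" using expint by blast
    have I1: "integral {0..c} (\<lambda>s. V (ST (Z y1) s) - V (ST (Z y2) s)) \<le> integral {0..c} (\<lambda>s. C * d * exp (k * s))"
      by (rule integral_le[OF intd expi]) (use hd in \<open>auto simp: abs_le_iff\<close>)
    have I2: "integral {0..c} (\<lambda>s. - (V (ST (Z y1) s) - V (ST (Z y2) s))) \<le> integral {0..c} (\<lambda>s. C * d * exp (k * s))"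
      by (rule integral_le[OF integrable_neg[OF intd] expi]) (use hd in \<open>auto simp: abs_le_iff\<close>)
    have eqd: "\<Phi> (Z y1) c - \<Phi> (Z y2) c = integral {0..c} (\<lambda>s. V (ST (Z y1) s) - V (ST (Z y2) s))"
      by (simp add: \<Phi>_def integral_diff[OF int1 int2])
    have ival: "integral {0..c} (\<lambda>s. C * d * exp (k * s)) = C * d * exp (k * c) / k - C * d / k"
      using integral_unique[OF expint] by simp
    have absI: "\<bar>\<Phi> (Z y1) c - \<Phi> (Z y2) c\<bar> \<le> C * d * exp (k * c) / k - C * d / k"
    proof -
      have I2': "- integral {0..c} (\<lambda>s. V (ST (Z y1) s) - V (ST (Z y2) s)) \<le> integral {0..c} (\<lambda>s. C * d * exp (k * s))"
        using I2 by (simp only: integral_neg)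
      show ?thesis unfolding eqd abs_le_iff using I1 I2' ival by linarith
    qed
    have "\<bar>apply_bcontfun (\<psi> y1) t - apply_bcontfun (\<psi> y2) t\<bar> = exp (- k * c) * \<bar>\<Phi> (Z y1) c - \<Phi> (Z y2) c\<bar>"
      by (simp add: \<psi>app c_def abs_mult flip: right_diff_distrib)
    also have "\<dots> \<le> exp (- k * c) * (C * d * exp (k * c) / k - C * d / k)"
      using absI by (rule mult_left_mono) simp
    also have "\<dots> = C * d / k - exp (- k * c) * (C * d / k)"
      by (simp add: algebra_simps exp_minus field_simps)
    also have "\<dots> \<le> C * d / k"
      using C0 d0 k0 by simp
    also have "\<dots> \<le> 1/2 * d"
      using C0 d0 k0 by (simp add: k_def field_simps)
    finally show "dist (apply_bcontfun (\<psi> y1) t) (apply_bcontfun (\<psi> y2) t) \<le> 1/2 * dist y1 y2"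
      by (simp add: dist_real_def d_def)
  qed

  have "\<exists>!y. \<psi> y = y" by (rule banach_fix_type[of "1/2"]) (use contr in auto)
  then obtain y where y: "\<psi> y = y" and yu: "\<And>y'. \<psi> y' = y' \<Longrightarrow> y' = y" by metis
  define z where "z = Z y"
  have zc: "continuous_on {0..Tmax} z" unfolding z_def by (rule Zc)
  have zfix: "\<Phi> z t = z t" if t: "t \<in> {0..Tmax}" for t
  proof -
    have "apply_bcontfun y t = exp (- k * t) * \<Phi> z t"
      using \<psi>app[of y t] y clid[OF t] by (simp add: z_def)
    then have "z t = exp (k * t) * (exp (- k * t) * \<Phi> z t)" by (simp add: z_def Z_def)
    also have "\<dots> = \<Phi> z t" by (simp add: exp_minus field_simps)
    finally show ?thesis by simp
  qed
  show ?thesis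
  proof (intro exI[of _ z] conjI ballI allI impI)
    show "continuous_on {0..Tmax} z" by (rule zc)
  next
    fix t assume t: "t \<in> {0..Tmax}"
    have "((\<lambda>s. V (ST z s)) has_integral \<Phi> z t) {0..t}"
      unfolding \<Phi>_def using hint[OF zc, of t] t by (simp add: integrable_integral)
    then show "((\<lambda>s. V (measure F (still_travelling Td {Xmin..Xmax} z s))) has_integral z t) {0..t}"
      using zfix[OF t] by (simp add: ST_def)
  next
    fix w t
    assume w: "continuous_on {0..Tmax} w \<and>
              (\<forall>t \<in> {0..Tmax}.
                 ((\<lambda>s. V (measure F (still_travelling Td {Xmin..Xmax} w s))) has_integral w t) {0..t})"
      and t: "t \<in> {0..Tmax}"
    have wc: "continuous_on {0..Tmax} w" using w by simp
    have wi: "((\<lambda>s. V (ST w s)) has_integral w t) {0..t}" if "t \<in> {0..Tmax}" for t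
      using w that by (simp add: ST_def)
    define yw where "yw = Bcontfun (\<lambda>t. exp (- k * cl t) * w (cl t))"
    have ywapp: "apply_bcontfun yw t = exp (- k * cl t) * w (cl t)" for t
    proof -
      have "continuous_on {0..Tmax} (\<lambda>t. exp (- k * t) * w t)"
        by (intro continuous_intros wc)
      from bc[OF this] show ?thesis unfolding yw_def by (simp add: Bcontfun_inverse)
    qed
    have Zyw: "Z yw s = w s" if "s \<in> {0..Tmax}" for s
    proof -
      have "Z yw s = exp (k * s) * (exp (- k * s) * w s)"
        by (simp add: Z_def ywapp clid[OF that])
      also have "\<dots> = w s" by (simp add: exp_minus field_simps)
      finally show ?thesis .
    qed
    have "\<psi> yw = yw"
    proof (rule bcontfun_eqI)
      fix t
      have c: "cl t \<in> {0..Tmax}" by (rule cl)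
      have "\<Phi> (Z yw) (cl t) = \<Phi> w (cl t)"
        unfolding \<Phi>_def
      proof (rule integral_cong)
        fix s assume s: "s \<in> {0..cl t}"
        have "\<forall>\<tau>\<in>{0..s}. Z yw \<tau> = w \<tau>" using s c by (auto intro!: Zyw)
        then show "V (ST (Z yw) s) = V (ST w s)" unfolding ST_def by (simp only: st_local)
      qed
      also have "\<dots> = w (cl t)" unfolding \<Phi>_def using wi[OF c] by (rule integral_unique)
      finally show "apply_bcontfun (\<psi> yw) t = apply_bcontfun yw t" by (simp add: \<psi>app ywapp)
    qed
    then have "yw = y" by (rule yu)
    then show "w t = z t" using Zyw[OF t] by (simp add: z_def)
  qed
qed

end
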